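(* Let $\mathcal{V}$ be a finite set and $\theta\mapsto\boldsymbol{z}_\theta\in\mathbb{R}^{|\mathcal{V}|}$, $\theta\in\mathbb{R}^p$, a differentiable logit map; let $\pi_\theta(a)=\frac{\exp z_\theta(a)}{\sum_{a'}\exp z_\theta(a')}$. Fix behavioral logits $\boldsymbol{z}_{\text{old}}\in\mathbb{R}^{|\mathcal{V}|}$, an advantage vector $\boldsymbol{A}\in\mathbb{R}^{|\mathcal{V}|}$ and $\beta>0$, and set $\boldsymbol{z}^*=\boldsymbol{z}_{\text{old}}+\boldsymbol{A}/\beta$, $\pi^*(a)=\frac{\exp z^*(a)}{\sum_{a'}\exp z^*(a')}$. Define $$\mathcal{L}_{\text{LCO-MSE}}(\theta)=\frac{1}{|\mathcal{V}|}\sum_{a}(z_\theta(a)-z^*(a))^2,\quad \mathcal{L}_{\text{LCO-LCH}}(\theta)=\frac{1}{|\mathcal{V}|}\sum_{a}\log\cosh(z_\theta(a)-z^*(a)),\quad \mathcal{L}_{\text{LCO-KLD}}(\theta)=\sum_{a}\pi^*(a)\log\frac{\pi^*(a)}{\pi_\theta(a)}.$$ At a given $\theta$, let $\sigma_{\max}$ be the largest singular value of the Jacobian $\partial\boldsymbol{z}_\theta/\partial\theta\in\mathbb{R}^{|\mathcal{V}|\times p}$. Then, with Euclidean norms, $$\|\nabla_\theta\mathcal{L}_{\text{LCO-MSE}}\|\le\frac{2}{|\mathcal{V}|}\sigma_{\max}\sqrt{|\mathcal{V}|\,\mathcal{L}_{\text{LCO-MSE}}},\qquad \|\nabla_\theta\mathcal{L}_{\text{LCO-LCH}}\|\le\frac{1}{|\mathcal{V}|}\sigma_{\max}\sqrt{|\mathcal{V}|\bigl(1-\exp(-2\mathcal{L}_{\text{LCO-LCH}})\bigr)},$$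 $$\|\nabla_\theta\mathcal{L}_{\text{LCO-KLD}}\|\le\sigma_{\max}\sqrt{2\,\mathcal{L}_{\text{LCO-KLD}}},$$ where all losses and gradients are evaluated at $\theta$.
   Context: These are the single-time-step Logits Convex Optimization (LCO) objectives, which fit the policy's logits (or distribution) to the optimal target $\boldsymbol{z}^*$ (resp. $\pi^*$) derived from the KL-regularized advantage-maximization objective. *)

theory Defs
  imports "HOL-Analysis.Analysis"
begin

text \<open>Vocabulary V is a finite type 'v; logit vectors are real^'v; parameters are real^'p.\<close>

definition softmax :: "real^'v::finite \<Rightarrow> 'v \<Rightarrow> real" where
  "softmax z a = exp (z $ a) / (\<Sum>b\<in>UNIV. exp (z $ b))"

definition zstar :: "real^'v::finite \<Rightarrow> real^'v \<Rightarrow> real \<Rightarrow> real^'v" where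
  "zstar zold A \<beta> = zold + (1 / \<beta>) *\<^sub>R A"

text \<open>Losses as functions of the current logits w, given the target logits zs.\<close>
definition lco_mse :: "real^'v::finite \<Rightarrow> real^'v \<Rightarrow> real" where
  "lco_mse zs w = (1 / real CARD('v)) * (\<Sum>a\<in>UNIV. (w $ a - zs $ a)^2)"

definition lco_lch :: "real^'v::finite \<Rightarrow> real^'v \<Rightarrow> real" where
  "lco_lch zs w = (1 / real CARD('v)) * (\<Sum>a\<in>UNIV. ln (cosh (w $ a - zs $ a)))"

definition lco_kld :: "real^'v::finite \<Rightarrow> real^'v \<Rightarrow> real" where
  "lco_kld zs w = (\<Sum>a\<in>UNIV. softmax zs a * ln (softmax zs a / softmax w a))"

definition gradient :: "(real^'p::finite \<Rightarrow> real) \<Rightarrow> real^'p \<Rightarrow> real^'p" where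
  "gradient f x = (\<chi> i. frechet_derivative f (at x) (axis i 1))"

text \<open>Largest singular value of the Jacobian = Euclidean operator (spectral) norm.\<close>
definition sigma_max :: "(real^'p::finite \<Rightarrow> real^'v::finite) \<Rightarrow> real^'p \<Rightarrow> real" where
  "sigma_max z \<theta> = onorm (frechet_derivative z (at \<theta>))"

end

theory Submission imports Defs begin

lemma kl_pt:
  fixes a b :: real
  assumes a: "0 < a" "a \<le> 1" and b: "0 < b" "b \<le> 1"
  shows "(a - b)^2 / 2 \<le> a * ln (a / b) - a + b"
proof -
  define F where "F = (\<lambda>x::real. a * ln a - a * ln x - a + x - (a - x)^2 / 2)"
  have dF: "DERIV F x :> (x - a) * (1 - x) / x" if "x > 0" for x
  proof -
    have "DERIV F x :> (0 - a * (1/x) - 0 + 1 - (2 * (a - x) * (0 - 1)) / 2)"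
      unfolding F_def using that by (auto intro!: derivative_eq_intros)
    moreover have "(0 - a * (1/x) - 0 + 1 - (2 * (a - x) * (0 - 1)) / 2) = (x - a) * (1 - x) / x"
      using that by (simp add: field_simps)
    ultimately show ?thesis by simp
  qed
  have Fa: "F a = 0" unfolding F_def by simp
  have "0 \<le> F b"
  proof (cases "a \<le> b")
    case True
    have "F a \<le> F b"
    proof (rule DERIV_nonneg_imp_nondecreasing[OF True])
      fix x assume "a \<le> x" "x \<le> b"
      thus "\<exists>y. DERIV F x :> y \<and> y \<ge> 0" using a b
        by (intro exI[of _ "(x - a) * (1 - x) / x"]) (auto intro!: dF)
    qed
    thus ?thesis using Fa by simp
  next
    case False
    have "F b \<ge> F a"
    proof (rule DERIV_nonpos_imp_nonincreasing[of b a F])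
      show "b \<le> a" using False by simp
      fix x assume "b \<le> x" "x \<le> a"
      thus "\<exists>y. DERIV F x :> y \<and> y \<le> 0" using a b
        by (intro exI[of _ "(x - a) * (1 - x) / x"])
           (auto intro!: dF divide_nonpos_pos mult_nonpos_nonneg)
    qed
    thus ?thesis using Fa by simp
  qed
  thus ?thesis unfolding F_def using a b by (simp add: ln_div right_diff_distrib)
qed

lemma exp_jensen:
  fixes x :: "'a \<Rightarrow> real"
  assumes "finite I" "I \<noteq> {}"
  shows "real (card I) * exp ((\<Sum>i\<in>I. x i) / real (card I)) \<le> (\<Sum>i\<in>I. exp (x i))"
proof -
  define m where "m = (\<Sum>i\<in>I. x i) / real (card I)"
  have n: "real (card I) > 0" using assms by auto
  have "\<And>i. exp m * (1 + (x i - m)) \<le> exp (x i)"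
  proof -
    fix i
    have "exp m * (1 + (x i - m)) \<le> exp m * exp (x i - m)"
      by (rule mult_left_mono) auto
    also have "\<dots> = exp (x i)" by (simp add: exp_diff)
    finally show "exp m * (1 + (x i - m)) \<le> exp (x i)" .
  qed
  hence "(\<Sum>i\<in>I. exp m * (1 + (x i - m))) \<le> (\<Sum>i\<in>I. exp (x i))"
    by (rule sum_mono)
  moreover have "(\<Sum>i\<in>I. exp m * (1 + (x i - m))) = exp m * (real (card I) + (\<Sum>i\<in>I. x i) - real (card I) * m)"
    by (simp add: sum_distrib_left[symmetric] sum.distrib sum_subtractf)
  moreover have "real (card I) * m = (\<Sum>i\<in>I. x i)" unfolding m_def using n by simp
  ultimately show ?thesis unfolding m_def[symmetric] by (simp add: mult.commute)
qed

lemma sep_deriv: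
  fixes \<phi> \<phi>' :: "'v::finite \<Rightarrow> real \<Rightarrow> real" and w :: "real^'v"
  assumes "\<And>a. (\<phi> a has_real_derivative \<phi>' a (w$a)) (at (w$a))"
  shows "((\<lambda>x::real^'v. \<Sum>a\<in>UNIV. \<phi> a (x$a)) has_derivative (\<lambda>h. (\<chi> a. \<phi>' a (w$a)) \<bullet> h)) (at w)"
proof -
  have "\<And>a. ((\<lambda>x::real^'v. \<phi> a (x$a)) has_derivative (\<lambda>h. h$a * \<phi>' a (w$a))) (at w)"
  proof -
    fix a
    have 1: "((\<lambda>x::real^'v. x$a) has_derivative (\<lambda>h. h$a)) (at w)"
      by (rule bounded_linear_imp_has_derivative) (rule bounded_linear_vec_nth)
    show "((\<lambda>x::real^'v. \<phi> a (x$a)) has_derivative (\<lambda>h. h$a * \<phi>' a (w$a))) (at w)"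
      by (rule DERIV_compose_FDERIV[OF assms 1])
  qed
  hence "((\<lambda>x::real^'v. \<Sum>a\<in>UNIV. \<phi> a (x$a)) has_derivative (\<lambda>h. \<Sum>a\<in>UNIV. h$a * \<phi>' a (w$a))) (at w)"
    by (rule has_derivative_sum)
  thus ?thesis
    by (rule has_derivative_eq_rhs) (simp add: inner_vec_def mult.commute)
qed

lemma grad_bound:
  fixes z :: "real^'p::finite \<Rightarrow> real^'v::finite" and L :: "real^'v \<Rightarrow> real"
  assumes zd: "z differentiable (at \<theta>)"
    and LD: "(L has_derivative (\<lambda>h. G \<bullet> h)) (at (z \<theta>))"
  shows "norm (gradient (\<lambda>t. L (z t)) \<theta>) \<le> onorm (frechet_derivative z (at \<theta>)) * norm G"
proof -
  define J where "J = frechet_derivative z (at \<theta>)"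
  have zJ: "(z has_derivative J) (at \<theta>)" using zd frechet_derivative_works J_def by blast
  have bl: "bounded_linear J" using zJ has_derivative_bounded_linear by blast
  have D: "((\<lambda>t. L (z t)) has_derivative (\<lambda>h. G \<bullet> J h)) (at \<theta>)"
    using diff_chain_at[OF zJ LD] by (simp add: o_def)
  have fd: "frechet_derivative (\<lambda>t. L (z t)) (at \<theta>) = (\<lambda>h. G \<bullet> J h)"
    using frechet_derivative_at[OF D] by simp
  define g where "g = gradient (\<lambda>t. L (z t)) \<theta>"
  have gc: "\<And>i. g $ i = G \<bullet> J (axis i 1)" unfolding g_def gradient_def fd by simp
  have ge: "g = (\<Sum>i\<in>UNIV. g $ i *\<^sub>R axis i 1)"
    by (simp add: vec_eq_iff axis_def sum.delta' if_distrib cong: if_cong)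
  have lin: "linear J" using bl bounded_linear.linear by blast
  have "J g = (\<Sum>i\<in>UNIV. g $ i *\<^sub>R J (axis i 1))"
    by (subst ge) (simp add: linear_sum[OF lin] linear_scale[OF lin])
  hence "G \<bullet> J g = (\<Sum>i\<in>UNIV. g $ i * (G \<bullet> J (axis i 1)))"
    by (simp add: inner_sum_right)
  also have "\<dots> = g \<bullet> g" by (simp add: gc inner_vec_def)
  also have "\<dots> = (norm g)^2" by (simp add: power2_norm_eq_inner)
  finally have eq: "(norm g)^2 = G \<bullet> J g" by simp
  have "G \<bullet> J g \<le> norm G * norm (J g)" using Cauchy_Schwarz_ineq2 by (meson abs_le_D1)
  also have "\<dots> \<le> norm G * (onorm J * norm g)"
    by (rule mult_left_mono[OF onorm[OF bl]]) simp
  finally have "norm g * norm g \<le> (onorm J * norm G) * norm g" using eq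
    by (simp add: power2_eq_square algebra_simps)
  moreover have "0 \<le> onorm J" using onorm_pos_le[OF bl] .
  ultimately have "norm g \<le> onorm J * norm G"
    by (metis mult_right_le_imp_le norm_ge_zero order_le_less mult_nonneg_nonneg)
  thus ?thesis unfolding g_def J_def .
qed

lemma softmax_pos: "softmax z a > 0"
  unfolding softmax_def by (intro divide_pos_pos) (auto intro!: sum_pos)

lemma softmax_sum: "(\<Sum>a\<in>UNIV. softmax z a) = 1"
proof -
  have "(\<Sum>b\<in>UNIV. exp (z $ b)) > 0" by (auto intro!: sum_pos)
  thus ?thesis unfolding softmax_def by (simp add: sum_divide_distrib[symmetric])
qed

lemma softmax_le1: "softmax z a \<le> 1"
proof -
  have "softmax z a \<le> (\<Sum>b\<in>UNIV. softmax z b)"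
    by (rule member_le_sum) (auto intro: less_imp_le softmax_pos)
  thus ?thesis by (simp add: softmax_sum)
qed

lemma mse_deriv:
  fixes zs w :: "real^'v::finite"
  shows "(lco_mse zs has_derivative (\<lambda>h. (\<chi> a. (1 / real CARD('v)) * (2 * (w$a - zs$a))) \<bullet> h)) (at w)"
proof -
  have eq: "lco_mse zs = (\<lambda>x. \<Sum>a\<in>UNIV. (\<lambda>a y. (1 / real CARD('v)) * (y - zs$a)^2) a (x$a))"
    by (rule ext) (simp add: lco_mse_def sum_distrib_left)
  show ?thesis unfolding eq
    by (rule sep_deriv[where \<phi>' = "\<lambda>a y. (1 / real CARD('v)) * (2 * (y - zs$a))"])
       (auto intro!: derivative_eq_intros)
qed

lemma lch_deriv:
  fixes zs w :: "real^'v::finite"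
  shows "(lco_lch zs has_derivative (\<lambda>h. (\<chi> a. (1 / real CARD('v)) * (sinh (w$a - zs$a) / cosh (w$a - zs$a))) \<bullet> h)) (at w)"
proof -
  have eq: "lco_lch zs = (\<lambda>x. \<Sum>a\<in>UNIV. (\<lambda>a y. (1 / real CARD('v)) * ln (cosh (y - zs$a))) a (x$a))"
    by (rule ext) (simp add: lco_lch_def sum_distrib_left)
  show ?thesis unfolding eq
    by (rule sep_deriv[where \<phi>' = "\<lambda>a y. (1 / real CARD('v)) * (sinh (y - zs$a) / cosh (y - zs$a))"])
       (auto intro!: derivative_eq_intros simp: field_simps)
qed

lemma kld_deriv:
  fixes zs w :: "real^'v::finite"
  shows "(lco_kld zs has_derivative (\<lambda>h. (\<chi> a. softmax w a - softmax zs a) \<bullet> h)) (at w)"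
proof -
  define p where "p = softmax zs"
  define S where "S = (\<lambda>x::real^'v. \<Sum>b\<in>UNIV. exp (x$b))"
  have Spos: "\<And>x. S x > 0" unfolding S_def by (auto intro!: sum_pos)
  have eq: "lco_kld zs = (\<lambda>x. (\<Sum>a\<in>UNIV. (\<lambda>a y. p a * ln (p a) - p a * y) a (x$a)) + ln (S x))"
  proof (rule ext)
    fix x :: "real^'v"
    have "\<And>a. p a * ln (p a / softmax x a) = (p a * ln (p a) - p a * x$a) + p a * ln (S x)"
    proof -
      fix a
      have q: "softmax x a = exp (x$a) / S x" unfolding softmax_def S_def by simp
      have "ln (softmax x a) = x$a - ln (S x)" unfolding q using Spos[of x] by (simp add: ln_div)
      moreover have "ln (p a / softmax x a) = ln (p a) - ln (softmax x a)"
        using softmax_pos[of zs a] softmax_pos[of x a] unfolding p_def by (simp add: ln_div)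
      ultimately have "ln (p a / softmax x a) = ln (p a) - (x$a - ln (S x))" by simp
      thus "p a * ln (p a / softmax x a) = (p a * ln (p a) - p a * x$a) + p a * ln (S x)"
        by (simp only: right_diff_distrib distrib_left)
    qed
    hence "lco_kld zs x = (\<Sum>a\<in>UNIV. p a * ln (p a) - p a * x$a) + (\<Sum>a\<in>UNIV. p a) * ln (S x)"
      unfolding lco_kld_def p_def[symmetric] by (simp add: sum.distrib sum_distrib_right)
    thus "lco_kld zs x = (\<Sum>a\<in>UNIV. (\<lambda>a y. p a * ln (p a) - p a * y) a (x$a)) + ln (S x)"
      by (simp add: p_def softmax_sum)
  qed
  have d1: "((\<lambda>x::real^'v. \<Sum>a\<in>UNIV. (\<lambda>a y. p a * ln (p a) - p a * y) a (x$a)) has_derivative (\<lambda>h. (\<chi> a. - p a) \<bullet> h)) (at w)"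
    by (rule sep_deriv[where \<phi>' = "\<lambda>a y. - p a"]) (auto intro!: derivative_eq_intros)
  have dS: "(S has_derivative (\<lambda>h. (\<chi> a. exp (w$a)) \<bullet> h)) (at w)"
    unfolding S_def
    by (rule sep_deriv[where \<phi> = "\<lambda>a y. exp y" and \<phi>' = "\<lambda>a y. exp y", simplified])
  have d2: "((\<lambda>x. ln (S x)) has_derivative (\<lambda>h. ((\<chi> a. exp (w$a)) \<bullet> h) * inverse (S w))) (at w)"
    by (rule DERIV_compose_FDERIV[OF DERIV_ln[OF Spos] dS])
  have "(lco_kld zs has_derivative (\<lambda>h. (\<chi> a. - p a) \<bullet> h + ((\<chi> a. exp (w$a)) \<bullet> h) * inverse (S w))) (at w)"
    unfolding eq by (rule has_derivative_add[OF d1 d2])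
  thus ?thesis
  proof (rule has_derivative_eq_rhs)
    show "(\<lambda>h. (\<chi> a. - p a) \<bullet> h + ((\<chi> a. exp (w$a)) \<bullet> h) * inverse (S w)) = (\<lambda>h. (\<chi> a. softmax w a - softmax zs a) \<bullet> h)"
      by (rule ext) (simp add: inner_vec_def p_def softmax_def S_def sum_subtractf sum_distrib_left sum_negf divide_inverse mult_ac right_diff_distrib)
  qed
qed

lemma norm_sq_vec: "(norm (x::real^'v::finite))^2 = (\<Sum>a\<in>UNIV. (x$a)^2)"
  unfolding power2_norm_eq_inner inner_vec_def by (simp add: power2_eq_square)

lemma tanh_sq: "(sinh d / cosh d)^2 = 1 - exp (-2 * ln (cosh (d::real)))"
proof -
  have c: "cosh d > 0" by simp
  have e: "exp (-2 * ln (cosh d)) = 1 / (cosh d)^2"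
  proof -
    have "exp (-2 * ln (cosh d)) * (cosh d)^2 = exp (-2 * ln (cosh d)) * exp (ln (cosh d)) * exp (ln (cosh d))"
      using c by (simp add: power2_eq_square)
    also have "\<dots> = exp (-2 * ln (cosh d) + ln (cosh d) + ln (cosh d))" by (simp only: exp_add)
    also have "\<dots> = 1" by simp
    finally show ?thesis using c by (simp add: field_simps del: exp_ln)
  qed
  have p: "1 + (sinh d)^2 \<noteq> 0" by (smt (verit) zero_le_power2)
  show ?thesis unfolding e using p
    by (simp add: power_divide field_simps cosh_square_eq)
qed

theorem proposition4p7:
  fixes z :: "real^'p::finite \<Rightarrow> real^'v::finite"
    and zold A :: "real^'v" and \<beta> :: real and \<theta> :: "real^'p"
  assumes diff: "\<And>t. z differentiable (at t)"
    and beta_pos: "\<beta> > 0"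
  defines "zs \<equiv> zstar zold A \<beta>"
  shows "norm (gradient (\<lambda>t. lco_mse zs (z t)) \<theta>)
           \<le> 2 / real CARD('v) * sigma_max z \<theta> * sqrt (real CARD('v) * lco_mse zs (z \<theta>))
         \<and> norm (gradient (\<lambda>t. lco_lch zs (z t)) \<theta>)
           \<le> 1 / real CARD('v) * sigma_max z \<theta>
               * sqrt (real CARD('v) * (1 - exp (- 2 * lco_lch zs (z \<theta>))))
         \<and> norm (gradient (\<lambda>t. lco_kld zs (z t)) \<theta>)
           \<le> sigma_max z \<theta> * sqrt (2 * lco_kld zs (z \<theta>))"
proof -
  define n where "n = real CARD('v)"
  define w where "w = z \<theta>"
  define \<sigma> where "\<sigma> = sigma_max z \<theta>"
  have npos: "n > 0" unfolding n_def by simp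
  have bl: "bounded_linear (frechet_derivative z (at \<theta>))"
    using diff[of \<theta>] frechet_derivative_works has_derivative_bounded_linear by blast
  have \<sigma>pos: "\<sigma> \<ge> 0" unfolding \<sigma>_def sigma_max_def using onorm_pos_le[OF bl] .
  define G1 where "G1 = (\<chi> a. (1 / real CARD('v)) * (2 * (w$a - zs$a)))"
  define G2 where "G2 = (\<chi> a. (1 / real CARD('v)) * (sinh (w$a - zs$a) / cosh (w$a - zs$a)))"
  define G3 where "G3 = (\<chi> a. softmax w a - softmax zs a)"
  have b1: "norm (gradient (\<lambda>t. lco_mse zs (z t)) \<theta>) \<le> \<sigma> * norm G1"
    unfolding \<sigma>_def sigma_max_def G1_def w_def by (rule grad_bound[OF diff mse_deriv])
  have b2: "norm (gradient (\<lambda>t. lco_lch zs (z t)) \<theta>) \<le> \<sigma> * norm G2"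
    unfolding \<sigma>_def sigma_max_def G2_def w_def by (rule grad_bound[OF diff lch_deriv])
  have b3: "norm (gradient (\<lambda>t. lco_kld zs (z t)) \<theta>) \<le> \<sigma> * norm G3"
    unfolding \<sigma>_def sigma_max_def G3_def w_def by (rule grad_bound[OF diff kld_deriv])
  have "norm G1 = 2 / n * sqrt (n * lco_mse zs w)"
  proof -
    have "(norm G1)^2 = (\<Sum>a\<in>UNIV. ((1/n) * (2 * (w$a - zs$a)))^2)"
      unfolding norm_sq_vec G1_def n_def by simp
    also have "\<dots> = (\<Sum>a\<in>UNIV. (2/n)^2 * (w$a - zs$a)^2)"
      by (intro sum.cong refl) (simp add: power2_eq_square algebra_simps)
    also have "\<dots> = (2/n)^2 * (n * lco_mse zs w)"
      unfolding lco_mse_def n_def[symmetric] using npos by (simp add: sum_distrib_left)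
    finally have "(norm G1)^2 = (2/n)^2 * (n * lco_mse zs w)" .
    hence "norm G1 = sqrt ((2/n)^2 * (n * lco_mse zs w))"
      by (metis norm_ge_zero real_sqrt_unique)
    thus ?thesis using npos by (simp add: real_sqrt_mult)
  qed
  hence r1: "norm (gradient (\<lambda>t. lco_mse zs (z t)) \<theta>) \<le> 2 / n * \<sigma> * sqrt (n * lco_mse zs w)"
    using b1 by (simp add: mult_ac)
  have key2: "(\<Sum>a\<in>UNIV. (sinh (w$a - zs$a) / cosh (w$a - zs$a))^2) \<le> n * (1 - exp (- 2 * lco_lch zs w))"
  proof -
    define x where "x = (\<lambda>a. -2 * ln (cosh (w$a - zs$a)))"
    have J: "n * exp ((\<Sum>a\<in>UNIV. x a) / n) \<le> (\<Sum>a\<in>UNIV. exp (x a))"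
      using exp_jensen[of "UNIV::'v set" x] unfolding n_def by simp
    have m: "(\<Sum>a\<in>UNIV. x a) / n = - 2 * lco_lch zs w"
      unfolding x_def lco_lch_def n_def[symmetric] using npos
      by (simp add: sum_distrib_left[symmetric] sum_negf field_simps)
    have "(\<Sum>a\<in>UNIV. (sinh (w$a - zs$a) / cosh (w$a - zs$a))^2) = (\<Sum>a\<in>UNIV. 1 - exp (x a))"
      unfolding x_def by (simp add: tanh_sq)
    also have "\<dots> = n - (\<Sum>a\<in>UNIV. exp (x a))" by (simp add: sum_subtractf n_def)
    also have "\<dots> \<le> n - n * exp (- 2 * lco_lch zs w)" using J m by simp
    finally show ?thesis by (simp add: algebra_simps)
  qed
  have "norm G2 \<le> 1 / n * sqrt (n * (1 - exp (- 2 * lco_lch zs w)))"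
  proof -
    have "(norm G2)^2 = (1/n)^2 * (\<Sum>a\<in>UNIV. (sinh (w$a - zs$a) / cosh (w$a - zs$a))^2)"
      unfolding norm_sq_vec G2_def n_def[symmetric] sum_distrib_left
      by (intro sum.cong refl) (simp add: power_divide power_mult_distrib)
    also have "\<dots> \<le> (1/n)^2 * (n * (1 - exp (- 2 * lco_lch zs w)))"
      by (rule mult_left_mono[OF key2]) simp
    finally have "norm G2 \<le> sqrt ((1/n)^2 * (n * (1 - exp (- 2 * lco_lch zs w))))"
      by (rule real_le_rsqrt)
    thus ?thesis using npos by (simp add: real_sqrt_mult)
  qed
  hence r2: "norm (gradient (\<lambda>t. lco_lch zs (z t)) \<theta>) \<le> 1 / n * \<sigma> * sqrt (n * (1 - exp (- 2 * lco_lch zs w)))"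
    using b2 mult_left_mono[OF _ \<sigma>pos] by (smt (verit) mult.assoc mult.commute)
  have "norm G3 \<le> sqrt (2 * lco_kld zs w)"
  proof (rule real_le_rsqrt)
    have "(norm G3)^2 = (\<Sum>a\<in>UNIV. (softmax zs a - softmax w a)^2)"
      unfolding norm_sq_vec G3_def by (simp add: power2_commute)
    also have "\<dots> \<le> (\<Sum>a\<in>UNIV. 2 * (softmax zs a * ln (softmax zs a / softmax w a) - softmax zs a + softmax w a))"
    proof (rule sum_mono)
      fix a
      show "(softmax zs a - softmax w a)^2 \<le> 2 * (softmax zs a * ln (softmax zs a / softmax w a) - softmax zs a + softmax w a)"
        using kl_pt[OF softmax_pos softmax_le1 softmax_pos softmax_le1, of zs a w a] by simp
    qed
    also have "\<dots> = 2 * lco_kld zs w"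
      unfolding lco_kld_def
      by (simp add: sum_distrib_left[symmetric] sum.distrib sum_subtractf softmax_sum)
    finally show "(norm G3)^2 \<le> 2 * lco_kld zs w" .
  qed
  hence r3: "norm (gradient (\<lambda>t. lco_kld zs (z t)) \<theta>) \<le> \<sigma> * sqrt (2 * lco_kld zs w)"
    using b3 mult_left_mono[OF _ \<sigma>pos] by (meson order_trans)
  show ?thesis using r1 r2 r3 unfolding n_def w_def \<sigma>_def by simp
qed

end
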